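(* Let $a,b,d>0$, $c\geq c^*=-\sqrt{3bd}$, $\phi(x)=\frac{ax^3+bx^2+cx+d}{x^3}$ ($x>0$), let $\overline{t}$ be the unique equilibrium of $\phi$, and let $\{t_n\}_{n\ge0}$ be a positive solution of $t_{n+1}=\phi(t_n)$. Let $$G(x)=a^3x^6+(2a^2b-ac-d)x^5+(ab^2-ad-bc+2a^2c)x^4+(2a^2d+2abc-c^2-bd)x^3+(ac^2+2abd-2cd)x^2+(2acd-d^2)x+ad^2$$ and suppose that $G$ has no root of even multiplicity. Then: \begin{description} \item[(a)] If $\phi$ has no 2-cycle, then $\{t_n\}$ converges to $\overline{t}$. \item[(b)] If $\phi$ has one 2-cycle $(p,q)$ with $p<\overline{t}<q$, then $\{t_n\}$ converges to the 2-cycle $(p,q)$ if $t_0\neq\overline{t}$; otherwise $\{t_n\}$ converges to $\overline{t}$. \item[(c)] If $\phi$ has two 2-cycles $(p_1,q_1)$, $(p_2,q_2)$ with $p_1<p_2<\overline{t}<q_2<q_1$, then $\{t_n\}$ converges to $\overline{t}$ if $t_0\in(p_2,q_2)$, converges to the 2-cycle $(p_2,q_2)$ if $t_0\in\{p_2,q_2\}$, and otherwise converges to the 2-cycle $(p_1,q_1)$. \item[(d)] If $\phi$ has three 2-cycles $(p_1,q_1)$, $(p_2,q_2)$, $(p_3,q_3)$ with $p_1<p_2<p_3<\overline{t}<q_3<q_2<q_1$, then $\{t_n\}$ converges to the 2-cycle $(p_3,q_3)$ if $t_0\in(p_2,q_2)\setminus\{\overline{t}\}$, converges to $\overline{t}$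 if $t_0=\overline{t}$, converges to the 2-cycle $(p_2,q_2)$ if $t_0\in\{p_2,q_2\}$, and otherwise converges to the 2-cycle $(p_1,q_1)$. \end{description}
   Context: An equilibrium is $t>0$ with $\phi(t)=t$. A 2-cycle is a pair $(p,q)$ of positive numbers with $p\ne q$, $\phi(p)=q$, $\phi(q)=p$. A positive solution is a sequence with $t_0>0$ and $t_{n+1}=\phi(t_n)$. The sequence $\{t_n\}$ converges to the 2-cycle $(p,q)$ if one of the subsequences $\{t_{2n}\}$, $\{t_{2n+1}\}$ converges to $p$ and the other to $q$. *)

theory Defs
  imports Complex_Main "HOL-Computational_Algebra.Polynomial"
begin

definition phi :: "real \<Rightarrow> real \<Rightarrow> real \<Rightarrow> real \<Rightarrow> real \<Rightarrow> real" where
  "phi a b c d x = (a * x ^ 3 + b * x ^ 2 + c * x + d) / x ^ 3"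

definition is_equilibrium :: "(real \<Rightarrow> real) \<Rightarrow> real \<Rightarrow> bool" where
  "is_equilibrium f t \<longleftrightarrow> t > 0 \<and> f t = t"

definition is_two_cycle :: "(real \<Rightarrow> real) \<Rightarrow> real \<Rightarrow> real \<Rightarrow> bool" where
  "is_two_cycle f p q \<longleftrightarrow> p > 0 \<and> q > 0 \<and> p \<noteq> q \<and> f p = q \<and> f q = p"

definition two_cycles :: "(real \<Rightarrow> real) \<Rightarrow> (real \<times> real) set" where
  "two_cycles f = {(p, q). p < q \<and> is_two_cycle f p q}"

definition is_solution :: "(real \<Rightarrow> real) \<Rightarrow> (nat \<Rightarrow> real) \<Rightarrow> bool" where
  "is_solution f t \<longleftrightarrow> t 0 > 0 \<and> (\<forall>n. t (Suc n) = f (t n))"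

definition converges_to_cycle :: "(nat \<Rightarrow> real) \<Rightarrow> real \<Rightarrow> real \<Rightarrow> bool" where
  "converges_to_cycle t p q \<longleftrightarrow>
     ((\<lambda>n. t (2 * n)) \<longlonglongrightarrow> p \<and> (\<lambda>n. t (2 * n + 1)) \<longlonglongrightarrow> q) \<or>
     ((\<lambda>n. t (2 * n)) \<longlonglongrightarrow> q \<and> (\<lambda>n. t (2 * n + 1)) \<longlonglongrightarrow> p)"

definition G_poly :: "real \<Rightarrow> real \<Rightarrow> real \<Rightarrow> real \<Rightarrow> real poly" where
  "G_poly a b c d =
     [: a * d ^ 2,
        2 * a * c * d - d ^ 2,
        a * c ^ 2 + 2 * a * b * d - 2 * c * d,
        2 * a ^ 2 * d + 2 * a * b * c - c ^ 2 - b * d,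
        a * b ^ 2 - a * d - b * c + 2 * a ^ 2 * c,
        2 * a ^ 2 * b - a * c - d,
        a ^ 3 :]"

end

theory Submission
  imports Defs
begin


lemma even_odd_lim:
  fixes t :: "nat \<Rightarrow> real"
  assumes e: "(\<lambda>n. t (2*n)) \<longlonglongrightarrow> L" and o: "(\<lambda>n. t (2*n+1)) \<longlonglongrightarrow> L"
  shows "t \<longlonglongrightarrow> L"
proof (rule LIMSEQ_I)
  fix r :: real assume r: "0 < r"
  from LIMSEQ_D[OF e r] obtain N1 where N1: "\<forall>n\<ge>N1. norm (t (2*n) - L) < r" by blast
  from LIMSEQ_D[OF o r] obtain N2 where N2: "\<forall>n\<ge>N2. norm (t (2*n+1) - L) < r" by blast
  show "\<exists>no. \<forall>n\<ge>no. norm (t n - L) < r"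
  proof (intro exI allI impI)
    fix n assume n: "n \<ge> 2*(N1+N2)"
    show "norm (t n - L) < r"
    proof (cases "even n")
      case True then obtain k where k: "n = 2*k" by blast
      with n N1 show ?thesis by auto
    next
      case False then obtain k where k: "n = 2*k+1" using oddE by blast
      with n N2 show ?thesis by auto
    qed
  qed
qed

locale setting =
  fixes f :: "real \<Rightarrow> real" and a tbar :: real
  assumes a_pos: "0 < a"
    and f_gt: "\<And>x. 0 < x \<Longrightarrow> a < f x"
    and f_anti: "\<And>x y. 0 < x \<Longrightarrow> x \<le> y \<Longrightarrow> f y \<le> f x"
    and f_cont: "\<And>x. 0 < x \<Longrightarrow> isCont f x"
    and eq: "is_equilibrium f tbar"
    and chg: "\<And>r. 0 < r \<Longrightarrow> f (f r) = r \<Longrightarrow> f r \<noteq> r \<Longrightarrow>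
       \<exists>e>0. ((\<forall>x. r-e<x \<and> x<r \<longrightarrow> f (f x) < x) \<and> (\<forall>x. r<x \<and> x<r+e \<longrightarrow> f (f x) > x))
           \<or> ((\<forall>x. r-e<x \<and> x<r \<longrightarrow> f (f x) > x) \<and> (\<forall>x. r<x \<and> x<r+e \<longrightarrow> f (f x) < x))"
begin

lemma f_pos: "0 < x \<Longrightarrow> 0 < f x"
  using f_gt[of x] a_pos by linarith

lemma tbar: "0 < tbar" "f tbar = tbar"
  using eq unfolding is_equilibrium_def by auto

lemma psi_mono: assumes "0 < x" "x \<le> y" shows "f (f x) \<le> f (f y)"
proof -
  have "f y \<le> f x" using f_anti[OF assms] .
  moreover have "0 < f y" using f_pos assms by simp
  ultimately show ?thesis using f_anti[of "f y" "f x"] by simp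
qed

lemma psi_cont: assumes "0 < x" shows "isCont (\<lambda>x. f (f x)) x"
  using f_cont[OF assms] f_cont[OF f_pos[OF assms]] by (rule isCont_o2)

lemma eq_unique: "0 < z \<Longrightarrow> f z = z \<Longrightarrow> z = tbar"
proof -
  assume z: "0 < z" "f z = z"
  show "z = tbar"
  proof (rule ccontr)
    assume "z \<noteq> tbar"
    then consider "z < tbar" | "tbar < z" by linarith
    then show False
    proof cases
      case 1 then have "f tbar \<le> f z" using f_anti[of z tbar] z by auto
      then show False using 1 tbar z by auto
    next
      case 2 then have "f z \<le> f tbar" using f_anti[of tbar z] tbar by auto
      then show False using 2 tbar z by auto
    qed
  qed
qed

lemma fixed_char:
  assumes "0 < z" "f (f z) = z" "z \<noteq> tbar"
  shows "(min z (f z), max z (f z)) \<in> two_cycles f"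
proof -
  have "f z \<noteq> z"
  proof
    assume "f z = z" then show False using eq_unique[of z] assms(1,3) by simp
  qed
  moreover have "0 < f z" using f_pos assms(1) by simp
  ultimately show ?thesis using assms
    unfolding two_cycles_def is_two_cycle_def by (cases "z \<le> f z") (simp_all add: min_def max_def)
qed

lemma cyc: "(p,q) \<in> two_cycles f \<Longrightarrow> 0 < p \<and> p < q \<and> f p = q \<and> f q = p"
  unfolding two_cycles_def is_two_cycle_def by auto

lemma down:
  fixes s :: "nat \<Rightarrow> real"
  assumes s: "\<And>n. s (Suc n) = f (f (s n))" and u: "0 < u" "f (f u) = u" "u < s 0"
    and h: "\<And>x. u < x \<Longrightarrow> x \<le> s 0 \<Longrightarrow> f (f x) < x"
  shows "s \<longlonglongrightarrow> u"
proof -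
  have inv: "u \<le> s n \<and> s n \<le> s 0 \<and> s (Suc n) \<le> s n" for n
  proof (induction n)
    case 0
    have "s 1 \<le> s 0" using s[of 0] h[of "s 0"] u by auto
    then show ?case using u by auto
  next
    case (Suc n)
    have A: "u \<le> s (Suc n)" using s[of n] psi_mono[of u "s n"] Suc u by auto
    have B: "s (Suc n) \<le> s 0" using Suc by auto
    have C: "s (Suc (Suc n)) \<le> s (Suc n)"
    proof (cases "u = s (Suc n)")
      case True then show ?thesis using s[of "Suc n"] u by auto
    next
      case False then show ?thesis using s[of "Suc n"] h[of "s (Suc n)"] A B by auto
    qed
    show ?case using A B C by auto
  qed
  have "decseq s" using inv by (simp add: decseq_SucI)
  then obtain L where L: "s \<longlonglongrightarrow> L" "\<forall>i. L \<le> s i"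
    using decseq_convergent[of s u] inv by blast
  have Lu: "u \<le> L" using L(1) inv by (intro LIMSEQ_le_const) auto
  have L0: "L \<le> s 0" using L by auto
  have "(\<lambda>n. f (f (s n))) \<longlonglongrightarrow> f (f L)"
    using psi_cont[of L] Lu u L(1) by (intro isCont_tendsto_compose[where g="\<lambda>x. f (f x)"]) auto
  moreover have "(\<lambda>n. f (f (s n))) \<longlonglongrightarrow> L"
    using L(1) s LIMSEQ_Suc[OF L(1)] by simp
  ultimately have "f (f L) = L" using LIMSEQ_unique by blast
  then have "\<not> u < L" using h[of L] L0 by auto
  then show ?thesis using Lu L by auto
qed

lemma up:
  fixes s :: "nat \<Rightarrow> real"
  assumes s: "\<And>n. s (Suc n) = f (f (s n))" and v: "0 < s 0" "f (f v) = v" "s 0 < v"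
    and h: "\<And>x. s 0 \<le> x \<Longrightarrow> x < v \<Longrightarrow> f (f x) > x"
  shows "s \<longlonglongrightarrow> v"
proof -
  have inv: "s n \<le> v \<and> s 0 \<le> s n \<and> s n \<le> s (Suc n)" for n
  proof (induction n)
    case 0
    have "s 0 \<le> s 1" using s[of 0] h[of "s 0"] v by auto
    then show ?case using v by auto
  next
    case (Suc n)
    have A: "s (Suc n) \<le> v" using s[of n] psi_mono[of "s n" v] Suc v by auto
    have B: "s 0 \<le> s (Suc n)" using Suc by auto
    have C: "s (Suc n) \<le> s (Suc (Suc n))"
    proof (cases "v = s (Suc n)")
      case True then show ?thesis using s[of "Suc n"] v by auto
    next
      case False then show ?thesis using s[of "Suc n"] h[of "s (Suc n)"] A B by auto
    qed
    show ?case using A B C by auto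
  qed
  have "incseq s" using inv by (simp add: incseq_SucI)
  then obtain L where L: "s \<longlonglongrightarrow> L" "\<forall>i. s i \<le> L"
    using incseq_convergent[of s v] inv by blast
  have Lu: "L \<le> v" using L(1) inv by (intro LIMSEQ_le_const2) auto
  have L0: "s 0 \<le> L" using L by auto
  have "(\<lambda>n. f (f (s n))) \<longlonglongrightarrow> f (f L)"
    using psi_cont[of L] L0 v L(1) by (intro isCont_tendsto_compose[where g="\<lambda>x. f (f x)"]) auto
  moreover have "(\<lambda>n. f (f (s n))) \<longlonglongrightarrow> L"
    using L(1) s LIMSEQ_Suc[OF L(1)] by simp
  ultimately have "f (f L) = L" using LIMSEQ_unique by blast
  then have "\<not> L < v" using h[of L] L0 by auto
  then show ?thesis using Lu L by auto
qed


definition pos_on :: "real \<Rightarrow> real \<Rightarrow> bool" where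
  "pos_on l r \<longleftrightarrow> (\<forall>x. l < x \<and> x < r \<longrightarrow> x < f (f x))"
definition neg_on :: "real \<Rightarrow> real \<Rightarrow> bool" where
  "neg_on l r \<longleftrightarrow> (\<forall>x. l < x \<and> x < r \<longrightarrow> f (f x) < x)"

lemma D_cont: "0 < z \<Longrightarrow> isCont (\<lambda>z. f (f z) - z) z"
  by (intro isCont_diff psi_cont continuous_ident)

lemma S1:
  assumes l: "0 \<le> l" and nf: "\<And>z. l < z \<Longrightarrow> z < r \<Longrightarrow> f (f z) \<noteq> z"
  shows "pos_on l r \<or> neg_on l r"
proof (rule ccontr)
  assume "\<not> (pos_on l r \<or> neg_on l r)"
  then obtain x y where x: "l<x" "x<r" "\<not> x < f (f x)" and y: "l<y" "y<r" "\<not> f (f y) < y"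
    unfolding pos_on_def neg_on_def by blast
  have x': "f (f x) < x" using x nf[of x] by linarith
  have y': "y < f (f y)" using y nf[of y] by linarith
  define g where "g = (\<lambda>z. f (f z) - z)"
  have gc: "isCont g z" if "0 < z" for z unfolding g_def using D_cont[OF that] .
  have gx: "g x < 0" and gy: "0 < g y" unfolding g_def using x' y' by simp_all
  have cont: "\<forall>z. min x y \<le> z \<and> z \<le> max x y \<longrightarrow> isCont g z"
  proof (intro allI impI)
    fix z assume "min x y \<le> z \<and> z \<le> max x y"
    then have "0 < z" using x y l by (simp add: min_def split: if_splits)
    then show "isCont g z" by (rule gc)
  qed
  have "x \<noteq> y" using x' y' by auto
  then consider "x < y" | "y < x" by (rule linorder_neqE)
  then show False
  proof cases
    case 1
    have "\<exists>z. x \<le> z \<and> z \<le> y \<and> g z = 0"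
      by (rule IVT) (use gx gy 1 cont in \<open>simp_all add: min_def max_def\<close>)
    then obtain z where z: "x \<le> z" "z \<le> y" "g z = 0" by blast
    have "l < z" "z < r" using z x y by linarith+
    then show False using nf[of z] z(3) unfolding g_def by simp
  next
    case 2
    have "\<exists>z. y \<le> z \<and> z \<le> x \<and> g z = 0"
      by (rule IVT2) (use gx gy 2 cont in \<open>simp_all add: min_def max_def\<close>)
    then obtain z where z: "y \<le> z" "z \<le> x" "g z = 0" by blast
    have "l < z" "z < r" using z x y by linarith+
    then show False using nf[of z] z(3) unfolding g_def by simp
  qed
qed

lemma S2:
  assumes r: "0 < r" "f (f r) = r" "f r \<noteq> r" and lrm: "0 \<le> l" "l < r" "r < m"
    and nf1: "\<And>z. l < z \<Longrightarrow> z < r \<Longrightarrow> f (f z) \<noteq> z"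
    and nf2: "\<And>z. r < z \<Longrightarrow> z < m \<Longrightarrow> f (f z) \<noteq> z"
  shows "(pos_on l r \<longrightarrow> neg_on r m) \<and> (neg_on l r \<longrightarrow> pos_on r m)
       \<and> (neg_on r m \<longrightarrow> pos_on l r) \<and> (pos_on r m \<longrightarrow> neg_on l r)"
proof -
  obtain e where e: "e > 0" and
    ch: "((\<forall>x. r-e<x \<and> x<r \<longrightarrow> f (f x) < x) \<and> (\<forall>x. r<x \<and> x<r+e \<longrightarrow> f (f x) > x))
           \<or> ((\<forall>x. r-e<x \<and> x<r \<longrightarrow> f (f x) > x) \<and> (\<forall>x. r<x \<and> x<r+e \<longrightarrow> f (f x) < x))"
    using chg[OF r] by blast
  define x where "x = (max l (r-e) + r)/2"
  define y where "y = (min m (r+e) + r)/2"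
  have x: "l < x" "x < r" "r - e < x" unfolding x_def using e lrm by auto
  have y: "r < y" "y < m" "y < r + e" unfolding y_def using e lrm by auto
  have opp: "(f (f x) < x \<and> y < f (f y)) \<or> (x < f (f x) \<and> f (f y) < y)"
  proof (rule disjE[OF ch])
    assume h: "(\<forall>x. r-e<x \<and> x<r \<longrightarrow> f (f x) < x) \<and> (\<forall>x. r<x \<and> x<r+e \<longrightarrow> f (f x) > x)"
    have "f (f x) < x" using h x by blast
    moreover have "y < f (f y)" using h y by blast
    ultimately show ?thesis by blast
  next
    assume h: "(\<forall>x. r-e<x \<and> x<r \<longrightarrow> f (f x) > x) \<and> (\<forall>x. r<x \<and> x<r+e \<longrightarrow> f (f x) < x)"
    have "x < f (f x)" using h x by blast
    moreover have "f (f y) < y" using h y by blast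
    ultimately show ?thesis by blast
  qed
  have s1: "pos_on l r \<or> neg_on l r" using S1[OF lrm(1) nf1] by blast
  have s2: "pos_on r m \<or> neg_on r m" using S1[of r m, OF _ nf2] r(1) by simp
  from opp show ?thesis
  proof
    assume A: "f (f x) < x \<and> y < f (f y)"
    have "\<not> pos_on l r" unfolding pos_on_def using A x(1,2) by (meson less_asym)
    moreover have "\<not> neg_on r m" unfolding neg_on_def using A y(1,2) by (meson less_asym)
    ultimately show ?thesis using s1 s2 by blast
  next
    assume A: "x < f (f x) \<and> f (f y) < y"
    have "\<not> neg_on l r" unfolding neg_on_def using A x(1,2) by (meson less_asym)
    moreover have "\<not> pos_on r m" unfolding pos_on_def using A y(1,2) by (meson less_asym)
    ultimately show ?thesis using s1 s2 by blast
  qed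
qed

lemma S3:
  assumes "0 < p" and nf: "\<And>z. 0 < z \<Longrightarrow> z < p \<Longrightarrow> f (f z) \<noteq> z"
  shows "pos_on 0 p"
proof -
  have "pos_on 0 p \<or> neg_on 0 p" using S1[of 0 p, OF _ nf] by simp
  moreover
  define x where "x = min p a / 2"
  have x: "0 < x" "x < p" "x < a" unfolding x_def using assms a_pos by auto
  have "a < f (f x)" using f_gt f_pos x by blast
  then have "\<not> neg_on 0 p" unfolding neg_on_def using x(1,2,3) by (meson less_trans less_asym)
  ultimately show ?thesis by blast
qed

lemma S4:
  assumes "0 < q" and nf: "\<And>z. q < z \<Longrightarrow> f (f z) \<noteq> z"
  shows "neg_on q w"
proof -
  have main: "f (f x) < x" if x: "q < x" for x
  proof -
    define y where "y = max x (f a) + 1"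
    have y: "q < y" "x < y + 1" "f a < y" unfolding y_def using x by auto
    have "f (f y) \<le> f a" using f_anti[of a "f y"] f_gt[of y] a_pos y assms(1) by auto
    then have "f (f y) < y" using y by auto
    moreover have "pos_on q (y+1) \<or> neg_on q (y+1)" using S1[of q "y+1", OF _ nf] assms(1) by simp
    moreover have "q < y" "y < y + 1" using y by auto
    ultimately have "neg_on q (y+1)" unfolding pos_on_def by (meson less_asym)
    then show ?thesis using x y unfolding neg_on_def by auto
  qed
  then show ?thesis unfolding neg_on_def by auto
qed

lemma fix_mem:
  assumes "0 < z" "f (f z) = z"
  shows "z = tbar \<or> (\<exists>p q. (p,q) \<in> two_cycles f \<and> (z = p \<or> z = q))"
proof (cases "z = tbar")
  case False
  note fc = fixed_char[OF assms False]
  show ?thesis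
  proof (cases "z \<le> f z")
    case True
    then have "(z, f z) \<in> two_cycles f" using fc by (simp add: min_def max_def)
    then show ?thesis by blast
  next
    case F: False
    then have "(f z, z) \<in> two_cycles f" using fc by (simp add: min_def max_def)
    then show ?thesis by blast
  qed
qed simp

end

locale solsetting = setting +
  fixes t :: "nat \<Rightarrow> real"
  assumes sol: "is_solution f t"
begin

lemma t_pos: "0 < t n"
  using sol f_pos unfolding is_solution_def by (induction n) auto

lemma s_rec: "t (2 * Suc n) = f (f (t (2 * n)))"
  using sol unfolding is_solution_def by (simp add: numeral_2_eq_2)

lemma toL:
  assumes "neg_on u w" "0 < u" "f (f u) = u" "u < t 0" "t 0 < w"
  shows "(\<lambda>n. t (2*n)) \<longlonglongrightarrow> u"
  by (rule down[where s="\<lambda>n. t (2*n)"]) (use assms s_rec in \<open>auto simp: neg_on_def\<close>)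

lemma toR:
  assumes "pos_on w v" "0 \<le> w" "f (f v) = v" "w < t 0" "t 0 < v"
  shows "(\<lambda>n. t (2*n)) \<longlonglongrightarrow> v"
  by (rule up[where s="\<lambda>n. t (2*n)"]) (use assms s_rec t_pos in \<open>auto simp: pos_on_def\<close>)

lemma toFix:
  assumes "f (f u) = u" "t 0 = u"
  shows "(\<lambda>n. t (2*n)) \<longlonglongrightarrow> u"
proof -
  have "t (2*n) = u" for n by (induction n) (use assms s_rec in auto)
  then show ?thesis by simp
qed

lemma final_eq:
  assumes "(\<lambda>n. t (2*n)) \<longlonglongrightarrow> tbar" shows "t \<longlonglongrightarrow> tbar"
proof -
  have "(\<lambda>n. f (t (2*n))) \<longlonglongrightarrow> f tbar"
    using assms f_cont tbar by (intro isCont_tendsto_compose[where g=f]) auto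
  then have "(\<lambda>n. t (2*n+1)) \<longlonglongrightarrow> tbar" using sol tbar unfolding is_solution_def by simp
  then show ?thesis using even_odd_lim assms by blast
qed

lemma final_cyc:
  assumes pq: "(p,q) \<in> two_cycles f"
    and lim: "(\<lambda>n. t (2*n)) \<longlonglongrightarrow> p \<or> (\<lambda>n. t (2*n)) \<longlonglongrightarrow> q"
  shows "converges_to_cycle t p q"
proof -
  have c: "0 < p" "p < q" "f p = q" "f q = p" using cyc[OF pq] by auto
  have odd: "(\<lambda>n. t (2*n+1)) = (\<lambda>n. f (t (2*n)))" using sol unfolding is_solution_def by simp
  show ?thesis
  proof (cases "(\<lambda>n. t (2*n)) \<longlonglongrightarrow> p")
    case True
    have "(\<lambda>n. f (t (2*n))) \<longlonglongrightarrow> f p"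
      using True f_cont c by (intro isCont_tendsto_compose[where g=f]) auto
    then show ?thesis using True c odd unfolding converges_to_cycle_def by simp
  next
    case False
    then have L: "(\<lambda>n. t (2*n)) \<longlonglongrightarrow> q" using lim by blast
    have "(\<lambda>n. f (t (2*n))) \<longlonglongrightarrow> f q"
      using L f_cont c by (intro isCont_tendsto_compose[where g=f]) auto
    then show ?thesis using L c odd unfolding converges_to_cycle_def by simp
  qed
qed


lemma attract:
  assumes "pos_on v u" "neg_on u w" "0 \<le> v" "v < u" "u < w" "f (f u) = u" "v < t 0" "t 0 < w"
  shows "(\<lambda>n. t (2*n)) \<longlonglongrightarrow> u"
proof -
  consider "t 0 < u" | "t 0 = u" | "u < t 0" by linarith
  then show ?thesis
  proof cases
    case 1 then show ?thesis using toR[of v u] assms by blast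
  next
    case 2 then show ?thesis using toFix[of u] assms by blast
  next
    case 3 then show ?thesis using toL[of u w] assms by linarith
  qed
qed

lemma caseA:
  assumes C: "two_cycles f = {}"
  shows "t \<longlonglongrightarrow> tbar"
proof -
  have fx: "z = tbar" if "0 < z" "f (f z) = z" for z
    using fix_mem[OF that] C by blast
  have nfA: "f (f z) \<noteq> z" if "0 < z" "z < tbar" for z using fx[of z] that by linarith
  have nfB: "f (f z) \<noteq> z" if "tbar < z" for z using fx[of z] that tbar by linarith
  have P: "pos_on 0 tbar" using S3[OF tbar(1) nfA] .
  have N: "neg_on tbar (t 0 + tbar + 1)" using S4[OF tbar(1) nfB] .
  have "(\<lambda>n. t (2*n)) \<longlonglongrightarrow> tbar"
    by (rule attract[OF P N]) (use tbar t_pos[of 0] in auto)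
  then show ?thesis by (rule final_eq)
qed

lemma caseB:
  assumes C: "two_cycles f = {(p,q)}" and ord: "p < tbar" "tbar < q"
  shows "(t 0 \<noteq> tbar \<longrightarrow> converges_to_cycle t p q) \<and> (t 0 = tbar \<longrightarrow> t \<longlonglongrightarrow> tbar)"
proof -
  have m: "(p,q) \<in> two_cycles f" using C by simp
  note c = cyc[OF m]
  have fx: "z = tbar \<or> z = p \<or> z = q" if "0 < z" "f (f z) = z" for z
    using fix_mem[OF that] C by blast
  have fp: "f (f p) = p" "f (f q) = q" "f p \<noteq> p" "f q \<noteq> q" "0 < q" "0 < p" using c by auto
  have nf: "f (f z) \<noteq> z" if "0 < z" "z \<noteq> tbar" "z \<noteq> p" "z \<noteq> q" for z
    using fx[of z] that by auto
  have nfA: "f (f z) \<noteq> z" if "0 < z" "z < p" for z by (rule nf) (use that fp ord in linarith)+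
  have nfB: "f (f z) \<noteq> z" if "p < z" "z < tbar" for z by (rule nf) (use that fp ord in linarith)+
  have nfC: "f (f z) \<noteq> z" if "tbar < z" "z < q" for z by (rule nf) (use that fp ord tbar in linarith)+
  have nfD: "f (f z) \<noteq> z" if "q < z" for z by (rule nf) (use that fp ord tbar in linarith)+
  have t0: "0 < t 0" by (rule t_pos)
  have P0: "pos_on 0 p" using S3[OF fp(6) nfA] .
  have N1: "neg_on p tbar"
    using S2[OF fp(6,1,3) order_refl fp(6) ord(1) nfA nfB] P0 by blast
  have N3: "neg_on q (t 0 + q + 1)" using S4[OF fp(5) nfD] .
  have N3': "neg_on q (q+1)" using S4[OF fp(5) nfD] .
  have nfE: "f (f z) \<noteq> z" if "q < z" "z < q + 1" for z using nfD that by blast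
  have tq: "0 \<le> tbar" "q < q + 1" using tbar by auto
  have P2: "pos_on tbar q" using S2[of q tbar "q+1", OF fp(5,2,4) tq(1) ord(2) tq(2) nfC nfE] N3' by blast
  show ?thesis
  proof (intro conjI impI)
    assume "t 0 \<noteq> tbar"
    then consider "t 0 < tbar" | "tbar < t 0" by linarith
    then show "converges_to_cycle t p q"
    proof cases
      case 1
      have "(\<lambda>n. t (2*n)) \<longlonglongrightarrow> p"
        by (rule attract[OF P0 N1]) (use fp 1 t0 ord in auto)
      then show ?thesis using final_cyc[OF m] by blast
    next
      case 2
      have "(\<lambda>n. t (2*n)) \<longlonglongrightarrow> q"
        by (rule attract[OF P2 N3]) (use fp 2 t0 ord tbar in auto)
      then show ?thesis using final_cyc[OF m] by blast
    qed
  next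
    assume "t 0 = tbar"
    then show "t \<longlonglongrightarrow> tbar" using toFix[of tbar] tbar final_eq by simp
  qed
qed


lemma caseC:
  assumes C: "two_cycles f = {(p1,q1),(p2,q2)}"
    and ord: "p1 < p2" "p2 < tbar" "tbar < q2" "q2 < q1"
  shows "(t 0 \<in> {p2<..<q2} \<longrightarrow> t \<longlonglongrightarrow> tbar) \<and>
         (t 0 \<in> {p2, q2} \<longrightarrow> converges_to_cycle t p2 q2) \<and>
         (t 0 \<notin> {p2..q2} \<longrightarrow> converges_to_cycle t p1 q1)"
proof -
  have m1: "(p1,q1) \<in> two_cycles f" and m2: "(p2,q2) \<in> two_cycles f" using C by simp_all
  note c1 = cyc[OF m1] and c2 = cyc[OF m2]
  have fx: "z = tbar \<or> z = p1 \<or> z = q1 \<or> z = p2 \<or> z = q2" if "0 < z" "f (f z) = z" for z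
  proof -
    from fix_mem[OF that] consider "z = tbar" | p q where "(p,q) \<in> two_cycles f" "z = p \<or> z = q" by blast
    then show ?thesis
    proof cases
      case (2 p q)
      then show ?thesis unfolding C by auto
    qed simp
  qed
  have f1: "f (f p1) = p1" "f (f q1) = q1" "f p1 \<noteq> p1" "f q1 \<noteq> q1" "0 < q1" "0 < p1" using c1 by auto
  have f2: "f (f p2) = p2" "f (f q2) = q2" "f p2 \<noteq> p2" "f q2 \<noteq> q2" "0 < q2" "0 < p2" using c2 by auto
  have nf: "f (f z) \<noteq> z" if "0 < z" "z \<noteq> tbar" "z \<noteq> p1" "z \<noteq> q1" "z \<noteq> p2" "z \<noteq> q2" for z
    using fx[of z] that by auto
  have n01: "f (f z) \<noteq> z" if "0 < z" "z < p1" for z by (rule nf) (use that f1 f2 ord in linarith)+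
  have n12: "f (f z) \<noteq> z" if "p1 < z" "z < p2" for z by (rule nf) (use that f1 f2 ord in linarith)+
  have n2t: "f (f z) \<noteq> z" if "p2 < z" "z < tbar" for z by (rule nf) (use that f1 f2 ord in linarith)+
  have nt2: "f (f z) \<noteq> z" if "tbar < z" "z < q2" for z by (rule nf) (use that f1 f2 ord tbar in linarith)+
  have n21: "f (f z) \<noteq> z" if "q2 < z" "z < q1" for z by (rule nf) (use that f1 f2 ord tbar in linarith)+
  have n1i: "f (f z) \<noteq> z" if "q1 < z" for z by (rule nf) (use that f1 f2 ord tbar in linarith)+
  have n11: "f (f z) \<noteq> z" if "q1 < z" "z < q1 + 1" for z using n1i that by blast
  have le: "0 \<le> p1" "0 \<le> tbar" "0 \<le> q2" "q1 < q1 + 1" using f1 f2 tbar by auto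
  have t0: "0 < t 0" by (rule t_pos)
  have P0: "pos_on 0 p1" using S3[OF f1(6) n01] .
  have N1: "neg_on p1 p2"
    using S2[OF f1(6,1,3) order_refl f1(6) ord(1) n01 n12] P0 by blast
  have P2: "pos_on p2 tbar"
    using S2[OF f2(6,1,3) le(1) ord(1) ord(2) n12 n2t] N1 by blast
  have N5': "neg_on q1 (q1+1)" using S4[OF f1(5) n1i] .
  have N5: "neg_on q1 (t 0 + q1 + 1)" using S4[OF f1(5) n1i] .
  have P4: "pos_on q2 q1"
    using S2[of q1 q2 "q1+1", OF f1(5,2,4) le(3) ord(4) le(4) n21 n11] N5' by blast
  have N3: "neg_on tbar q2"
    using S2[of q2 tbar q1, OF f2(5,2,4) le(2) ord(3) ord(4) nt2 n21] P4 by blast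
  show ?thesis
  proof (intro conjI impI)
    assume "t 0 \<in> {p2<..<q2}"
    then have "p2 < t 0" "t 0 < q2" by auto
    then have "(\<lambda>n. t (2*n)) \<longlonglongrightarrow> tbar"
      by (intro attract[OF P2 N3]) (use le ord tbar in auto)
    then show "t \<longlonglongrightarrow> tbar" by (rule final_eq)
  next
    assume "t 0 \<in> {p2, q2}"
    then have "t 0 = p2 \<or> t 0 = q2" by auto
    then have "(\<lambda>n. t (2*n)) \<longlonglongrightarrow> p2 \<or> (\<lambda>n. t (2*n)) \<longlonglongrightarrow> q2"
      using toFix[of p2] toFix[of q2] f2 by blast
    then show "converges_to_cycle t p2 q2" using final_cyc[OF m2] by blast
  next
    assume "t 0 \<notin> {p2..q2}"
    then consider "t 0 < p2" | "q2 < t 0" by auto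
    then have "(\<lambda>n. t (2*n)) \<longlonglongrightarrow> p1 \<or> (\<lambda>n. t (2*n)) \<longlonglongrightarrow> q1"
    proof cases
      case 1
      have "(\<lambda>n. t (2*n)) \<longlonglongrightarrow> p1"
        by (rule attract[OF P0 N1]) (use 1 t0 f1 ord in auto)
      then show ?thesis by blast
    next
      case 2
      have "(\<lambda>n. t (2*n)) \<longlonglongrightarrow> q1"
        by (rule attract[OF P4 N5]) (use 2 t0 f1 f2 ord in auto)
      then show ?thesis by blast
    qed
    then show "converges_to_cycle t p1 q1" using final_cyc[OF m1] by blast
  qed
qed

lemma caseD:
  assumes C: "two_cycles f = {(p1,q1),(p2,q2),(p3,q3)}"
    and ord: "p1 < p2" "p2 < p3" "p3 < tbar" "tbar < q3" "q3 < q2" "q2 < q1"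
  shows "(t 0 \<in> {p2<..<q2} - {tbar} \<longrightarrow> converges_to_cycle t p3 q3) \<and>
         (t 0 = tbar \<longrightarrow> t \<longlonglongrightarrow> tbar) \<and>
         (t 0 \<in> {p2, q2} \<longrightarrow> converges_to_cycle t p2 q2) \<and>
         (t 0 \<notin> {p2..q2} \<longrightarrow> converges_to_cycle t p1 q1)"
proof -
  have m1: "(p1,q1) \<in> two_cycles f" and m2: "(p2,q2) \<in> two_cycles f"
    and m3: "(p3,q3) \<in> two_cycles f" using C by simp_all
  note c1 = cyc[OF m1] and c2 = cyc[OF m2] and c3 = cyc[OF m3]
  have fx: "z = tbar \<or> z = p1 \<or> z = q1 \<or> z = p2 \<or> z = q2 \<or> z = p3 \<or> z = q3"
    if "0 < z" "f (f z) = z" for z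
  proof -
    from fix_mem[OF that] consider "z = tbar" | p q where "(p,q) \<in> two_cycles f" "z = p \<or> z = q" by blast
    then show ?thesis
    proof cases
      case (2 p q)
      then show ?thesis unfolding C by auto
    qed simp
  qed
  have f1: "f (f p1) = p1" "f (f q1) = q1" "f p1 \<noteq> p1" "f q1 \<noteq> q1" "0 < q1" "0 < p1" using c1 by auto
  have f2: "f (f p2) = p2" "f (f q2) = q2" "f p2 \<noteq> p2" "f q2 \<noteq> q2" "0 < q2" "0 < p2" using c2 by auto
  have f3: "f (f p3) = p3" "f (f q3) = q3" "f p3 \<noteq> p3" "f q3 \<noteq> q3" "0 < q3" "0 < p3" using c3 by auto
  have nf: "f (f z) \<noteq> z" if "0 < z" "z \<noteq> tbar" "z \<noteq> p1" "z \<noteq> q1" "z \<noteq> p2" "z \<noteq> q2"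
     "z \<noteq> p3" "z \<noteq> q3" for z
    using fx[of z] that by auto
  have n01: "f (f z) \<noteq> z" if "0 < z" "z < p1" for z by (rule nf) (use that f1 f2 f3 ord in linarith)+
  have n12: "f (f z) \<noteq> z" if "p1 < z" "z < p2" for z by (rule nf) (use that f1 f2 f3 ord in linarith)+
  have n23: "f (f z) \<noteq> z" if "p2 < z" "z < p3" for z by (rule nf) (use that f1 f2 f3 ord in linarith)+
  have n3t: "f (f z) \<noteq> z" if "p3 < z" "z < tbar" for z by (rule nf) (use that f1 f2 f3 ord in linarith)+
  have nt3: "f (f z) \<noteq> z" if "tbar < z" "z < q3" for z by (rule nf) (use that f1 f2 f3 ord tbar in linarith)+
  have n32: "f (f z) \<noteq> z" if "q3 < z" "z < q2" for z by (rule nf) (use that f1 f2 f3 ord tbar in linarith)+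
  have n21: "f (f z) \<noteq> z" if "q2 < z" "z < q1" for z by (rule nf) (use that f1 f2 f3 ord tbar in linarith)+
  have n1i: "f (f z) \<noteq> z" if "q1 < z" for z by (rule nf) (use that f1 f2 f3 ord tbar in linarith)+
  have n11: "f (f z) \<noteq> z" if "q1 < z" "z < q1 + 1" for z using n1i that by blast
  have le: "0 \<le> p1" "0 \<le> p2" "0 \<le> tbar" "0 \<le> q3" "0 \<le> q2" "q1 < q1 + 1" using f1 f2 f3 tbar by auto
  have t0: "0 < t 0" by (rule t_pos)
  have P0: "pos_on 0 p1" using S3[OF f1(6) n01] .
  have N1: "neg_on p1 p2"
    using S2[OF f1(6,1,3) order_refl f1(6) ord(1) n01 n12] P0 by blast
  have P2: "pos_on p2 p3"
    using S2[OF f2(6,1,3) le(1) ord(1) ord(2) n12 n23] N1 by blast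
  have N3: "neg_on p3 tbar"
    using S2[OF f3(6,1,3) le(2) ord(2) ord(3) n23 n3t] P2 by blast
  have N7': "neg_on q1 (q1+1)" using S4[OF f1(5) n1i] .
  have N7: "neg_on q1 (t 0 + q1 + 1)" using S4[OF f1(5) n1i] .
  have P6: "pos_on q2 q1"
    using S2[of q1 q2 "q1+1", OF f1(5,2,4) le(5) ord(6) le(6) n21 n11] N7' by blast
  have N5: "neg_on q3 q2"
    using S2[of q2 q3 q1, OF f2(5,2,4) le(4) ord(5) ord(6) n32 n21] P6 by blast
  have P4: "pos_on tbar q3"
    using S2[of q3 tbar q2, OF f3(5,2,4) le(3) ord(4) ord(5) nt3 n32] N5 by blast
  show ?thesis
  proof (intro conjI impI)
    assume "t 0 \<in> {p2<..<q2} - {tbar}"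
    then have h: "p2 < t 0" "t 0 < q2" "t 0 \<noteq> tbar" by auto
    then consider "t 0 < tbar" | "tbar < t 0" by linarith
    then have "(\<lambda>n. t (2*n)) \<longlonglongrightarrow> p3 \<or> (\<lambda>n. t (2*n)) \<longlonglongrightarrow> q3"
    proof cases
      case 1
      have "(\<lambda>n. t (2*n)) \<longlonglongrightarrow> p3"
        by (rule attract[OF P2 N3]) (use 1 h le f3 ord in auto)
      then show ?thesis by blast
    next
      case 2
      have "(\<lambda>n. t (2*n)) \<longlonglongrightarrow> q3"
        by (rule attract[OF P4 N5]) (use 2 h le f3 ord in auto)
      then show ?thesis by blast
    qed
    then show "converges_to_cycle t p3 q3" using final_cyc[OF m3] by blast
  next
    assume "t 0 = tbar"
    then show "t \<longlonglongrightarrow> tbar" using toFix[of tbar] tbar final_eq by simp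
  next
    assume "t 0 \<in> {p2, q2}"
    then have "t 0 = p2 \<or> t 0 = q2" by auto
    then have "(\<lambda>n. t (2*n)) \<longlonglongrightarrow> p2 \<or> (\<lambda>n. t (2*n)) \<longlonglongrightarrow> q2"
      using toFix[of p2] toFix[of q2] f2 by blast
    then show "converges_to_cycle t p2 q2" using final_cyc[OF m2] by blast
  next
    assume "t 0 \<notin> {p2..q2}"
    then consider "t 0 < p2" | "q2 < t 0" by auto
    then have "(\<lambda>n. t (2*n)) \<longlonglongrightarrow> p1 \<or> (\<lambda>n. t (2*n)) \<longlonglongrightarrow> q1"
    proof cases
      case 1
      have "(\<lambda>n. t (2*n)) \<longlonglongrightarrow> p1"
        by (rule attract[OF P0 N1]) (use 1 t0 f1 ord in auto)
      then show ?thesis by blast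
    next
      case 2
      have "(\<lambda>n. t (2*n)) \<longlonglongrightarrow> q1"
        by (rule attract[OF P6 N7]) (use 2 t0 f1 f2 ord in auto)
      then show ?thesis by blast
    qed
    then show "converges_to_cycle t p1 q1" using final_cyc[OF m1] by blast
  qed
qed

end


lemma quad_pos:
  fixes b c d x :: real
  assumes b: "b > 0" and d: "d > 0" and c: "c \<ge> - sqrt (3 * b * d)" and x: "x > 0"
  shows "b * x^2 + c * x + d > 0"
proof -
  define s where "s = sqrt (3 * b * d)"
  have bd: "0 \<le> 3 * b * d" using mult_pos_pos[OF b d] by simp
  have s2: "s^2 = 3 * b * d" unfolding s_def using real_sqrt_pow2[OF bd] .
  have s0: "s \<ge> 0" unfolding s_def using bd by simp
  have cs: "- s \<le> c" using c unfolding s_def .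
  have "c * x \<ge> - s * x" using mult_right_mono[OF cs, of x] x by simp
  moreover have "4 * b * (b * x^2 - s * x + d) = (2*b*x - s)^2 + b * d"
    using s2 by (simp add: power2_eq_square algebra_simps)
  moreover have "(2*b*x - s)^2 + b * d > 0" using b d by (simp add: add_nonneg_pos)
  ultimately have "4 * b * (b * x^2 - s * x + d) > 0" by simp
  then have "b * x^2 - s * x + d > 0" using b by (simp add: zero_less_mult_iff)
  then show ?thesis using \<open>c * x \<ge> - s * x\<close> by linarith
qed

lemma K_nonneg:
  fixes b c d u v :: real
  assumes b: "b > 0" and d: "d > 0" and c: "c \<ge> - sqrt (3 * b * d)" and u: "u > 0" and v: "v > 0"
  shows "b + c * (u + v) + d * (u^2 + u*v + v^2) \<ge> 0"
proof -
  define s where "s = sqrt (3 * b * d)"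
  define w where "w = u + v"
  have bd: "0 \<le> 3 * b * d" using mult_pos_pos[OF b d] by simp
  have s2: "s^2 = 3 * b * d" unfolding s_def using real_sqrt_pow2[OF bd] .
  have w: "w > 0" unfolding w_def using u v by simp
  have cs: "- s \<le> c" using c unfolding s_def .
  have cw: "c * w \<ge> - s * w" using mult_right_mono[OF cs, of w] w by simp
  have m: "d * (u^2 + u*v + v^2) \<ge> d * (3 * w^2 / 4)"
  proof -
    have "u^2 + u*v + v^2 - 3 * w^2 / 4 = (u - v)^2 / 4" unfolding w_def by (simp add: power2_eq_square algebra_simps)
    then have "u^2 + u*v + v^2 \<ge> 3 * w^2 / 4" by (smt (verit) zero_le_power2 divide_nonneg_pos)
    then show ?thesis using d by (simp add: mult_left_mono)
  qed
  have "12 * d * (b - s * w + d * (3 * w^2 / 4)) = (3 * d * w - 2 * s)^2"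
    using s2 by (simp add: power2_eq_square algebra_simps)
  then have "12 * d * (b - s * w + d * (3 * w^2 / 4)) \<ge> 0" by simp
  then have "b - s * w + d * (3 * w^2 / 4) \<ge> 0" using d by (simp add: zero_le_mult_iff)
  then show ?thesis using cw m unfolding w_def by linarith
qed

lemma phi_alt: "x > 0 \<Longrightarrow> phi a b c d x = a + b * (1/x) + c * (1/x)^2 + d * (1/x)^3"
  unfolding phi_def by (simp add: field_simps power2_eq_square power3_eq_cube)

lemma phi_anti:
  fixes a b c d x y :: real
  assumes b: "b > 0" and d: "d > 0" and c: "c \<ge> - sqrt (3 * b * d)" and x: "0 < x" and xy: "x \<le> y"
  shows "phi a b c d y \<le> phi a b c d x"
proof -
  define u where "u = 1/x"
  define v where "v = 1/y"
  have u: "u > 0" and v: "v > 0" unfolding u_def v_def using x xy by auto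
  have uv: "v \<le> u" unfolding u_def v_def using x xy by (simp add: frac_le)
  have K: "b + c * (u + v) + d * (u^2 + u*v + v^2) \<ge> 0" by (rule K_nonneg[OF b d c u v])
  have "(a + b * u + c * u^2 + d * u^3) - (a + b * v + c * v^2 + d * v^3)
        = (u - v) * (b + c * (u + v) + d * (u^2 + u*v + v^2))"
    by (simp add: power2_eq_square power3_eq_cube algebra_simps)
  moreover have "(u - v) * (b + c * (u + v) + d * (u^2 + u*v + v^2)) \<ge> 0"
    using K uv by simp
  ultimately show ?thesis using phi_alt[of x] phi_alt[of y] x xy unfolding u_def v_def by simp
qed

lemma phi_gt:
  fixes a b c d x :: real
  assumes b: "b > 0" and d: "d > 0" and c: "c \<ge> - sqrt (3 * b * d)" and x: "0 < x"
  shows "a < phi a b c d x"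
proof -
  have "phi a b c d x = a + (b * x^2 + c * x + d) / x^3"
    unfolding phi_def using x by (simp add: field_simps power2_eq_square power3_eq_cube)
  moreover have "(b * x^2 + c * x + d) / x^3 > 0" using quad_pos[OF b d c x] x by simp
  ultimately show ?thesis by simp
qed

lemma phi_cont: "0 < x \<Longrightarrow> isCont (phi a b c d) x"
  unfolding phi_def by (intro continuous_intros) auto

lemma ident:
  fixes a b c d x :: real
  shows "(a - x) * (a*x^3+b*x^2+c*x+d)^3 + b * (a*x^3+b*x^2+c*x+d)^2 * x^3 + c * (a*x^3+b*x^2+c*x+d) * x^6 + d * x^9
     = - ((x^4 - (a*x^3+b*x^2+c*x+d)) * poly (G_poly a b c d) x)"
  unfolding G_poly_def by simp algebra

lemma psi_eq:
  fixes a b c d x :: real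
  assumes x: "x > 0" and N: "a*x^3+b*x^2+c*x+d > 0"
  shows "phi a b c d (phi a b c d x) - x
     = - ((x^4 - (a*x^3+b*x^2+c*x+d)) * poly (G_poly a b c d) x) / (a*x^3+b*x^2+c*x+d)^3"
proof -
  define N where "N = a*x^3+b*x^2+c*x+d"
  have N0: "N > 0" using N unfolding N_def .
  define y where "y = N / x^3"
  have y0: "y > 0" unfolding y_def using N0 x by simp
  have yx: "N = y * x^3" unfolding y_def using x by simp
  have py: "phi a b c d x = y" unfolding phi_def N_def y_def by simp
  have e1: "(phi a b c d y - x) * y^3 = a*y^3+b*y^2+c*y+d - x*y^3"
    unfolding phi_def using y0 by (simp add: field_simps)
  have e2: "(a*y^3+b*y^2+c*y+d - x*y^3) * x^9 = (a - x) * (y*x^3)^3 + b * (y*x^3)^2 * x^3 + c * (y*x^3) * x^6 + d * x^9"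
    by algebra
  have e3: "(phi a b c d y - x) * N^3 = ((phi a b c d y - x) * y^3) * x^9"
    unfolding yx by algebra
  have "(phi a b c d y - x) * N^3 = (a - x) * N^3 + b * N^2 * x^3 + c * N * x^6 + d * x^9"
    using e3 e1 e2 yx by simp
  also have "\<dots> = - ((x^4 - N) * poly (G_poly a b c d) x)"
    unfolding N_def by (rule ident)
  finally have "(phi a b c d y - x) * N^3 = - ((x^4 - N) * poly (G_poly a b c d) x)" .
  then have "phi a b c d y - x = - ((x^4 - N) * poly (G_poly a b c d) x) / N^3"
    using N0 by (subst eq_divide_eq) simp
  then show ?thesis using py unfolding N_def by simp
qed



lemma N_pos:
  fixes a b c d x :: real
  assumes a: "a > 0" and b: "b > 0" and d: "d > 0" and c: "c \<ge> - sqrt (3 * b * d)" and x: "x > 0"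
  shows "a*x^3+b*x^2+c*x+d > 0"
  using quad_pos[OF b d c x] a x by (smt (verit) mult_pos_pos zero_less_power)

lemma G_nz: "a > 0 \<Longrightarrow> G_poly a b c d \<noteq> 0"
proof
  assume a: "a > 0" and G: "G_poly a b c d = 0"
  have "coeff (G_poly a b c d) 6 = a^3" unfolding G_poly_def by (simp add: numeral_eq_Suc)
  then show False using G a by simp
qed

lemma phi_chg:
  fixes a b c d r :: real
  assumes a: "a > 0" and b: "b > 0" and d: "d > 0" and c: "c \<ge> - sqrt (3 * b * d)"
    and Gc: "\<forall>x::real. poly (G_poly a b c d) x = 0 \<longrightarrow> odd (order x (G_poly a b c d))"
    and r: "0 < r" "phi a b c d (phi a b c d r) = r" "phi a b c d r \<noteq> r"
  shows "\<exists>e>0. ((\<forall>x. r-e<x \<and> x<r \<longrightarrow> phi a b c d (phi a b c d x) < x) \<and> (\<forall>x. r<x \<and> x<r+e \<longrightarrow> phi a b c d (phi a b c d x) > x))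
           \<or> ((\<forall>x. r-e<x \<and> x<r \<longrightarrow> phi a b c d (phi a b c d x) > x) \<and> (\<forall>x. r<x \<and> x<r+e \<longrightarrow> phi a b c d (phi a b c d x) < x))"
proof -
  define f where "f = phi a b c d"
  define N where "N = (\<lambda>x::real. a*x^3+b*x^2+c*x+d)"
  define Gp where "Gp = G_poly a b c d"
  have Npos: "N x > 0" if "x > 0" for x unfolding N_def using N_pos[OF a b d c that] .
  have Gp0: "Gp \<noteq> 0" unfolding Gp_def using G_nz a by blast
  have D: "f (f x) - x = - ((x^4 - N x) * poly Gp x) / (N x)^3" if "x > 0" for x
    unfolding f_def N_def Gp_def using psi_eq[OF that] Npos[OF that] unfolding N_def by blast
  have Qr: "r^4 - N r \<noteq> 0"
  proof
    assume "r^4 - N r = 0"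
    then have "N r = r^4" by simp
    moreover have "f r = N r / r^3" unfolding f_def phi_def N_def by simp
    moreover have "r^4 / r^3 = r" using r(1) by (simp add: field_simps eval_nat_numeral)
    ultimately have "f r = r" by simp
    then show False using r(3) unfolding f_def by simp
  qed
  have "- ((r^4 - N r) * poly Gp r) / (N r)^3 = 0" using D[OF r(1)] r(2) unfolding f_def by simp
  then have Gr: "poly Gp r = 0" using Qr Npos[OF r(1)] by simp
  define k where "k = order r Gp"
  have ok: "odd k" unfolding k_def Gp_def using Gc Gr unfolding Gp_def by blast
  obtain R where R: "Gp = [:-r, 1:]^k * R" "\<not> [:-r, 1:] dvd R"
    using order_decomp[OF Gp0, of r] unfolding k_def by blast
  have Rr: "poly R r \<noteq> 0" using R(2) by (simp add: poly_eq_0_iff_dvd)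
  define h where "h = (\<lambda>x. - ((x^4 - N x) * poly R x) / (N x)^3)"
  have Dh: "f (f x) - x = (x - r)^k * h x" if "x > 0" for x
  proof -
    have "poly Gp x = (x - r)^k * poly R x" by (subst R(1)) (simp add: poly_power algebra_simps)
    then show ?thesis using D[OF that] unfolding h_def by (simp add: algebra_simps)
  qed
  have hc: "isCont h r" unfolding h_def N_def using Npos[OF r(1)] unfolding N_def
    by (intro continuous_intros) auto
  have hr: "h r \<noteq> 0" unfolding h_def using Qr Rr Npos[OF r(1)] by simp
  have lim: "(h \<longlongrightarrow> h r) (at r)" using hc isCont_def by blast
  have neg_pow: "(x - r)^k < 0" if "x < r" for x using ok that by simp
  have pos_pow: "(x - r)^k > 0" if "r < x" for x using that by simp
  show ?thesis
  proof (cases "h r > 0")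
    case True
    have "eventually (\<lambda>x. 0 < h x) (at r)" using order_tendstoD(1)[OF lim True] .
    then obtain dd where dd: "dd > 0" "\<And>x. x \<noteq> r \<Longrightarrow> dist x r < dd \<Longrightarrow> 0 < h x"
      unfolding eventually_at by auto
    define e where "e = min dd r"
    have e: "e > 0" unfolding e_def using dd r by simp
    have L: "f (f x) < x" if "r - e < x" "x < r" for x
    proof -
      have "x > 0" "dist x r < dd" using that e_def by (auto simp: dist_real_def)
      then have "0 < h x" "(x - r)^k < 0" using dd(2)[of x] neg_pow[of x] that by auto
      then have "(x - r)^k * h x < 0" by (simp add: mult_neg_pos)
      then show ?thesis using Dh[OF \<open>x > 0\<close>] by simp
    qed
    have Rt: "f (f x) > x" if "r < x" "x < r + e" for x
    proof -
      have "x > 0" "dist x r < dd" using that e_def r by (auto simp: dist_real_def)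
      then have "0 < h x" "(x - r)^k > 0" using dd(2)[of x] pos_pow[of x] that by auto
      then have "(x - r)^k * h x > 0" by simp
      then show ?thesis using Dh[OF \<open>x > 0\<close>] by simp
    qed
    show ?thesis using e L Rt unfolding f_def by blast
  next
    case False
    then have hn: "h r < 0" using hr by simp
    have "eventually (\<lambda>x. h x < 0) (at r)" using order_tendstoD(2)[OF lim hn] .
    then obtain dd where dd: "dd > 0" "\<And>x. x \<noteq> r \<Longrightarrow> dist x r < dd \<Longrightarrow> h x < 0"
      unfolding eventually_at by auto
    define e where "e = min dd r"
    have e: "e > 0" unfolding e_def using dd r by simp
    have L: "f (f x) > x" if "r - e < x" "x < r" for x
    proof -
      have "x > 0" "dist x r < dd" using that e_def by (auto simp: dist_real_def)
      then have "h x < 0" "(x - r)^k < 0" using dd(2)[of x] neg_pow[of x] that by auto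
      then have "(x - r)^k * h x > 0" by (simp add: mult_neg_neg)
      then show ?thesis using Dh[OF \<open>x > 0\<close>] by simp
    qed
    have Rt: "f (f x) < x" if "r < x" "x < r + e" for x
    proof -
      have "x > 0" "dist x r < dd" using that e_def r by (auto simp: dist_real_def)
      then have "h x < 0" "(x - r)^k > 0" using dd(2)[of x] pos_pow[of x] that by auto
      then have "(x - r)^k * h x < 0" by (simp add: mult_pos_neg)
      then show ?thesis using Dh[OF \<open>x > 0\<close>] by simp
    qed
    show ?thesis using e L Rt unfolding f_def by blast
  qed
qed



theorem theorem4:
  fixes a b c d tbar :: real and t :: "nat \<Rightarrow> real"
  assumes "a > 0" and "b > 0" and "d > 0"
    and "c \<ge> - sqrt (3 * b * d)"
    and "is_equilibrium (phi a b c d) tbar"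
    and "is_solution (phi a b c d) t"
    and "\<forall>x::real. poly (G_poly a b c d) x = 0 \<longrightarrow> odd (order x (G_poly a b c d))"
  shows
    "(two_cycles (phi a b c d) = {} \<longrightarrow> t \<longlonglongrightarrow> tbar)
   \<and> (\<forall>p q. two_cycles (phi a b c d) = {(p, q)} \<and> p < tbar \<and> tbar < q \<longrightarrow>
         (t 0 \<noteq> tbar \<longrightarrow> converges_to_cycle t p q) \<and> (t 0 = tbar \<longrightarrow> t \<longlonglongrightarrow> tbar))
   \<and> (\<forall>p1 q1 p2 q2. two_cycles (phi a b c d) = {(p1, q1), (p2, q2)} \<and>
         p1 < p2 \<and> p2 < tbar \<and> tbar < q2 \<and> q2 < q1 \<longrightarrow>
         (t 0 \<in> {p2<..<q2} \<longrightarrow> t \<longlonglongrightarrow> tbar) \<and>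
         (t 0 \<in> {p2, q2} \<longrightarrow> converges_to_cycle t p2 q2) \<and>
         (t 0 \<notin> {p2..q2} \<longrightarrow> converges_to_cycle t p1 q1))
   \<and> (\<forall>p1 q1 p2 q2 p3 q3. two_cycles (phi a b c d) = {(p1, q1), (p2, q2), (p3, q3)} \<and>
         p1 < p2 \<and> p2 < p3 \<and> p3 < tbar \<and> tbar < q3 \<and> q3 < q2 \<and> q2 < q1 \<longrightarrow>
         (t 0 \<in> {p2<..<q2} - {tbar} \<longrightarrow> converges_to_cycle t p3 q3) \<and>
         (t 0 = tbar \<longrightarrow> t \<longlonglongrightarrow> tbar) \<and>
         (t 0 \<in> {p2, q2} \<longrightarrow> converges_to_cycle t p2 q2) \<and>
         (t 0 \<notin> {p2..q2} \<longrightarrow> converges_to_cycle t p1 q1))"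
proof -
  have S: "solsetting (phi a b c d) a tbar t"
  proof (intro solsetting.intro setting.intro solsetting_axioms.intro)
    show "0 < a" by fact
    show "a < phi a b c d x" if "0 < x" for x using phi_gt[OF assms(2,3,4) that] .
    show "phi a b c d y \<le> phi a b c d x" if "0 < x" "x \<le> y" for x y
      using phi_anti[OF assms(2,3,4) that] .
    show "isCont (phi a b c d) x" if "0 < x" for x using phi_cont[OF that] .
    show "is_equilibrium (phi a b c d) tbar" by fact
    show "is_solution (phi a b c d) t" by fact
    show "\<exists>e>0. ((\<forall>x. r-e<x \<and> x<r \<longrightarrow> phi a b c d (phi a b c d x) < x) \<and> (\<forall>x. r<x \<and> x<r+e \<longrightarrow> phi a b c d (phi a b c d x) > x))
           \<or> ((\<forall>x. r-e<x \<and> x<r \<longrightarrow> phi a b c d (phi a b c d x) > x) \<and> (\<forall>x. r<x \<and> x<r+e \<longrightarrow> phi a b c d (phi a b c d x) < x))"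
      if "0 < r" "phi a b c d (phi a b c d r) = r" "phi a b c d r \<noteq> r" for r
      using phi_chg[OF assms(1,2,3,4,7) that] .
  qed
  interpret solsetting "phi a b c d" a tbar t by (rule S)
  show ?thesis
    using caseA caseB caseC caseD by blast
qed

end
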